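(* Let $p\in(1,\infty)$ and let $Y$ be a Banach space whose norm satisfies Rolewicz property $(\beta)$ with power type $p$. Then there exists $\gamma=\gamma(Y)>0$ such that for every non-contractive Lipschitz map $f\colon K_{\omega,1}\to Y$ there exists $i_0\in\mathbb N$ such that $$\|f(r)-f(t_{i_0})\|\le 2\left(\mathrm{Lip}(f)-\frac{\gamma}{\mathrm{Lip}(f)^{p-1}}\right).$$
   Context: For a Banach space $X$ with closed unit ball $B_X$ and a sequence $(y_n)_{n\ge1}$ in $X$, let $\mathrm{sep}[(y_n)]:=\inf\{\|y_m-y_n\|: m\neq n\}$. The $(\beta)$-modulus of the norm is $$\overline{\beta}_X(t):=1-\sup\Big\{\inf_{n\ge1}\tfrac{\|x+y_n\|}{2}\ :\ x\in B_X,\ (y_n)_{n\ge1}\subset B_X,\ \mathrm{sep}[(y_n)]\ge t\Big\}.$$ The norm satisfies Rolewicz property $(\beta)$ with power type $p$ (equivalently, has $(\beta)$-modulus of power type $p$) if there is a constant $c>0$ with $\overline{\beta}_X(t)\ge ct^p$ for all $t\in(0,2]$. $K_{\omega,1}$ is the star graph with a center $b$ and countably infinitely many leaves, each joined to $b$ by an edge; one leaf is denoted $r$ and the remaining leaves are labeled $(t_i)_{i\ge1}$. It carries the unweighted shortest-path metric $\rho$ (so $\rho(r,t_i)=2$, $\rho(t_i,t_j)=2$ for $i\ne j$, $\rho(b,\cdot)=1$ on leaves). A map $f$ between metric spaces is non-contractive if $d(f(x),f(y))\ge \rho(x,y)$ for all $x,y$; $\mathrm{Lip}(f)$ denotes its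 Lipschitz constant. *)

theory Defs
  imports "HOL-Analysis.Analysis"
begin

definition sep :: "(nat \<Rightarrow> 'a::real_normed_vector) \<Rightarrow> real" where
  "sep y = (INF mn \<in> {(m, n). m \<noteq> n}. norm (y (fst mn) - y (snd mn)))"

text \<open>The (beta)-modulus; the supremum is taken in the extended reals so that
  the supremum of an empty set is -infinity (modulus +infinity).\<close>
definition beta_modulus :: "'a::real_normed_vector itself \<Rightarrow> real \<Rightarrow> ereal" where
  "beta_modulus TYPE('a) t = 1 - Sup {ereal (INF n. norm (x + y n) / 2) | x (y :: nat \<Rightarrow> 'a).
       norm x \<le> 1 \<and> (\<forall>n. norm (y n) \<le> 1) \<and> sep y \<ge> t}"

definition beta_power_type :: "'a::real_normed_vector itself \<Rightarrow> real \<Rightarrow> bool" where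
  "beta_power_type TYPE('a) p \<longleftrightarrow>
     (\<exists>c>0. \<forall>t. 0 < t \<and> t \<le> 2 \<longrightarrow> beta_modulus TYPE('a) t \<ge> ereal (c * t powr p))"

text \<open>The star graph K_{omega,1}: center b, distinguished leaf r, leaves t_i.\<close>
datatype kvert = Ctr | Rt | Lf nat

definition rho :: "kvert \<Rightarrow> kvert \<Rightarrow> real" where
  "rho u v = (if u = v then 0 else if u = Ctr \<or> v = Ctr then 1 else 2)"

definition lipschitz_K :: "(kvert \<Rightarrow> 'a::real_normed_vector) \<Rightarrow> bool" where
  "lipschitz_K f \<longleftrightarrow> (\<exists>C. \<forall>u v. norm (f u - f v) \<le> C * rho u v)"

definition noncontractive_K :: "(kvert \<Rightarrow> 'a::real_normed_vector) \<Rightarrow> bool" where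
  "noncontractive_K f \<longleftrightarrow> (\<forall>u v. norm (f u - f v) \<ge> rho u v)"

definition Lip_K :: "(kvert \<Rightarrow> 'a::real_normed_vector) \<Rightarrow> real" where
  "Lip_K f = (SUP uv \<in> {(u, v). u \<noteq> v}. norm (f (fst uv) - f (snd uv)) / rho (fst uv) (snd uv))"

end

theory Submission
  imports Defs
begin

lemma key:
  fixes p c :: real and f :: "kvert \<Rightarrow> 'a::banach"
  assumes p: "1 < p" and c: "c > 0"
    and beta: "\<forall>t. 0 < t \<and> t \<le> 2 \<longrightarrow> beta_modulus TYPE('a) t \<ge> ereal (c * t powr p)"
    and lip: "lipschitz_K f" and nc: "noncontractive_K f"
  shows "\<exists>i0. norm (f Rt - f (Lf i0)) \<le> 2 * (Lip_K f - (c * 2 powr (p-1)) / Lip_K f powr (p - 1))"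
proof -
  define L where "L = Lip_K f"
  obtain C where C: "\<And>u v. norm (f u - f v) \<le> C * rho u v" using lip unfolding lipschitz_K_def by blast
  have bdd: "bdd_above ((\<lambda>uv. norm (f (fst uv) - f (snd uv)) / rho (fst uv) (snd uv)) ` {(u, v). u \<noteq> v})"
  proof (rule bdd_aboveI2)
    fix uv :: "kvert \<times> kvert" assume "uv \<in> {(u, v). u \<noteq> v}"
    then have "rho (fst uv) (snd uv) > 0" by (auto simp: rho_def split: prod.splits)
    then show "norm (f (fst uv) - f (snd uv)) / rho (fst uv) (snd uv) \<le> C"
      using C[of "fst uv" "snd uv"] by (simp add: divide_le_eq)
  qed
  have Lge: "norm (f u - f v) \<le> L * rho u v" for u v
  proof (cases "u = v")
    case True then show ?thesis by (simp add: rho_def)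
  next
    case False
    then have r: "rho u v > 0" by (auto simp: rho_def)
    have "norm (f u - f v) / rho u v \<le> L"
      unfolding L_def Lip_K_def using cSUP_upper[OF _ bdd, of "(u,v)"] False by auto
    then show ?thesis using r by (simp add: divide_le_eq mult.commute)
  qed
  have L1: "L \<ge> 1"
    using Lge[of Rt Ctr] nc[unfolded noncontractive_K_def, rule_format, of Rt Ctr]
    by (simp add: rho_def)
  then have Lpos: "L > 0" by simp
  define x where "x = (f Rt - f Ctr) /\<^sub>R L"
  define y where "y = (\<lambda>n. (f Ctr - f (Lf n)) /\<^sub>R L)"
  have nsc: "norm (v /\<^sub>R L) = norm v / L" for v :: 'a using Lpos by (simp add: divide_inverse_commute)
  have nx: "norm x \<le> 1" unfolding x_def nsc using Lge[of Rt Ctr] Lpos by (simp add: rho_def)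
  have ny: "\<forall>n. norm (y n) \<le> 1" unfolding y_def nsc proof fix n show "norm (f Ctr - f (Lf n)) / L \<le> 1" using Lge[of Ctr "Lf n"] Lpos by (simp add: rho_def) qed
  have sepy: "sep y \<ge> 2 / L"
    unfolding sep_def
  proof (rule cINF_greatest)
    have "(0::nat,1::nat) \<in> {(m::nat, n::nat). m \<noteq> n}" by simp
    then show "{(m::nat, n::nat). m \<noteq> n} \<noteq> {}" by blast
  next
    fix mn :: "nat \<times> nat" assume "mn \<in> {(m, n). m \<noteq> n}"
    then have ne: "fst mn \<noteq> snd mn" by auto
    have "y (fst mn) - y (snd mn) = (f (Lf (snd mn)) - f (Lf (fst mn))) /\<^sub>R L"
      unfolding y_def scaleR_diff_right[symmetric] by (rule arg_cong[where f="\<lambda>v. v /\<^sub>R L"]) simp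
    moreover have "norm (f (Lf (snd mn)) - f (Lf (fst mn))) \<ge> 2"
      using nc[unfolded noncontractive_K_def, rule_format, of "Lf (snd mn)" "Lf (fst mn)"] ne
      by (simp add: rho_def)
    ultimately show "2 / L \<le> norm (y (fst mn) - y (snd mn))"
      using Lpos by (simp only: nsc divide_right_mono)
  qed
  define t where "t = 2 / L"
  have t: "0 < t" "t \<le> 2" using L1 by (auto simp: t_def divide_le_eq)
  define I where "I = (INF n. norm (x + y n) / 2)"
  have mem: "ereal I \<in> {ereal (INF n. norm (x + y n) / 2) | x (y :: nat \<Rightarrow> 'a).
       norm x \<le> 1 \<and> (\<forall>n. norm (y n) \<le> 1) \<and> sep y \<ge> t}"
    using nx ny sepy unfolding I_def t_def by blast
  have "ereal (c * t powr p) \<le> 1 - ereal I"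
    using beta[rule_format, OF conjI[OF t]] Sup_upper[OF mem] ereal_minus_mono[of 1 1 "ereal I"]
    unfolding beta_modulus_def by (meson order.refl order_trans)
  also have "1 - ereal I = ereal (1 - I)" by (simp add: one_ereal_def)
  finally have Ile: "I \<le> 1 - c * t powr p" by simp
  have ctp: "c * t powr p > 0" using c t by simp
  have "I < 1 - c * t powr p / 2" using Ile ctp by linarith
  moreover have "bdd_below (range (\<lambda>n. norm (x + y n) / 2))" by (rule bdd_belowI2[of _ 0]) simp
  ultimately obtain i where i: "norm (x + y i) / 2 < 1 - c * t powr p / 2"
    unfolding I_def by (subst (asm) cINF_less_iff) auto
  have eq: "f Rt - f (Lf i) = L *\<^sub>R (x + y i)"
    using Lpos by (simp add: x_def y_def algebra_simps)
  have "norm (f Rt - f (Lf i)) = L * norm (x + y i)" using eq Lpos by simp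
  also have "\<dots> \<le> L * (2 - c * t powr p)" using i Lpos by simp
  also have "\<dots> = 2 * (L - (c * 2 powr (p-1)) / L powr (p - 1))"
  proof -
    have "t powr p = 2 powr p / L powr p" unfolding t_def using Lpos by (simp add: powr_divide)
    moreover have "2 powr p = 2 * 2 powr (p-1)" by (simp add: powr_diff)
    moreover have "L powr p = L * L powr (p-1)" using Lpos by (simp add: powr_diff)
    ultimately show ?thesis using Lpos by (simp add: field_simps)
  qed
  finally have "norm (f Rt - f (Lf i)) \<le> 2 * (L - (c * 2 powr (p-1)) / L powr (p - 1))" .
  then show ?thesis unfolding L_def by (rule exI)
qed

theorem lemma1:
  fixes p :: real
  assumes "1 < p"
    and "beta_power_type TYPE('a::banach) p"
  shows "\<exists>\<gamma>>0. \<forall>f :: kvert \<Rightarrow> 'a. lipschitz_K f \<and> noncontractive_K f \<longrightarrow>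
           (\<exists>i0. norm (f Rt - f (Lf i0)) \<le> 2 * (Lip_K f - \<gamma> / Lip_K f powr (p - 1)))"
proof -
  obtain c where c: "c > 0" and beta: "\<forall>t. 0 < t \<and> t \<le> 2 \<longrightarrow> beta_modulus TYPE('a) t \<ge> ereal (c * t powr p)"
    using assms(2) unfolding beta_power_type_def by blast
  show ?thesis
    apply (rule exI[of _ "c * 2 powr (p-1)"])
    using key[OF assms(1) c beta] c by auto
qed

end
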